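(* Let $M\ge4$ and let $g_n=e^{j2\pi\phi_n}$, $n=-2M,\dots,2M$, with $\phi_n\sim\mathcal{U}[0,1]$ i.i.d. Let $K_g(\tau)=\frac1M\sum_{n=-2M}^{2M}s_ng_ne^{j2\pi n\tau}$. There exist numerical constants $C_1,C_2,C_3$ such that, with probability at least $1-C_3(M^3\log M)^{-1/2}$, $$|K_g(\tau)|\le C_1\sqrt{\frac{\log M}{M}}\quad\text{and}\quad|K_g'(\tau)|\le C_2\sqrt{M\log M}\qquad\text{for all }\tau\in[0,1).$$
   Context: $j=\sqrt{-1}$. For $|n|\le2M$, $s_n=\frac1M\sum_{i=\max\{n-M,-M\}}^{\min\{n+M,M\}}(1-|i/M|)(1-|n/M-i/M|)$ (coefficients of the squared Fejér kernel; $|s_n|\le1$). $K_g'$ is the derivative in $\tau$. *)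

theory Defs
  imports "HOL-Probability.Probability"
begin

definition fejer_sq_coeff :: "nat \<Rightarrow> int \<Rightarrow> real" where
  "fejer_sq_coeff M n =
     (1 / real M) * (\<Sum>i = max (n - int M) (- int M) .. min (n + int M) (int M).
        (1 - \<bar>real_of_int i / real M\<bar>) *
        (1 - \<bar>real_of_int n / real M - real_of_int i / real M\<bar>))"

definition phase :: "(int \<Rightarrow> real) \<Rightarrow> int \<Rightarrow> complex" where
  "phase \<phi> n = exp (\<i> * complex_of_real (2 * pi * \<phi> n))"

definition K_g :: "nat \<Rightarrow> (int \<Rightarrow> real) \<Rightarrow> real \<Rightarrow> complex" where
  "K_g M \<phi> \<tau> = (1 / complex_of_real (real M)) *
     (\<Sum>n = - 2 * int M .. 2 * int M.
        complex_of_real (fejer_sq_coeff M n) * phase \<phi> n *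
        exp (\<i> * complex_of_real (2 * pi * real_of_int n * \<tau>)))"

definition phase_space :: "nat \<Rightarrow> (int \<Rightarrow> real) measure" where
  "phase_space M = PiM {- 2 * int M .. 2 * int M} (\<lambda>_. uniform_measure lborel {0..1})"

end

theory Submission
  imports Defs
begin



abbreviation U :: "real measure" where "U \<equiv> uniform_measure lborel {0..1}"

lemma U_density: "U = density lborel (\<lambda>x. ennreal (indicator {0..1::real} x))"
  unfolding uniform_measure_def
  by (intro density_cong) (auto simp: indicator_def)

lemma prob_space_U: "prob_space U"
  by (intro prob_space_uniform_measure) auto

lemma U_cos: "integral\<^sup>L U (\<lambda>x. cos (2*pi*x + b)) = 0"
proof -
  have "integral\<^sup>L U (\<lambda>x. cos (2*pi*x + b)) = integral\<^sup>L lborel (\<lambda>x. indicator {0..1::real} x *\<^sub>R cos (2*pi*x + b))"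
    unfolding U_density by (intro integral_density) auto
  also have "\<dots> = (\<integral>x. cos (2*pi*x + b) * indicator {0..1} x \<partial>lborel)"
    by (intro Bochner_Integration.integral_cong) auto
  also have "\<dots> = sin (2*pi*1 + b) / (2*pi) - sin (2*pi*0 + b) / (2*pi)"
    by (intro integral_FTC_Icc_real) (auto intro!: derivative_eq_intros)
  also have "\<dots> = 0" by (simp add: sin_add)
  finally show ?thesis .
qed

lemma indep_comp:
  assumes "finite I" "I \<noteq> {}"
  shows "prob_space.indep_vars (PiM I (\<lambda>_. U)) (\<lambda>_. U) (\<lambda>i \<omega>. \<omega> i) I"
proof -
  interpret P: prob_space "PiM I (\<lambda>_. U)" by (intro prob_space_PiM prob_space_U)
  show ?thesis
  proof (subst P.indep_vars_iff_distr_eq_PiM')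
    show "distr (PiM I (\<lambda>_. U)) (PiM I (\<lambda>_. U)) (\<lambda>x. restrict (\<lambda>i. x i) I) =
          PiM I (\<lambda>i. distr (PiM I (\<lambda>_. U)) U (\<lambda>\<omega>. \<omega> i))"
    proof -
      have "distr (PiM I (\<lambda>_. U)) (PiM I (\<lambda>_. U)) (\<lambda>x. restrict (\<lambda>i. x i) I) =
            distr (PiM I (\<lambda>_. U)) (PiM I (\<lambda>_. U)) (\<lambda>x. x)"
        by (intro distr_cong) (auto simp: space_PiM PiE_def extensional_restrict)
      also have "\<dots> = PiM I (\<lambda>_. U)" by (rule distr_id)
      also have "\<dots> = PiM I (\<lambda>i. distr (PiM I (\<lambda>_. U)) U (\<lambda>\<omega>. \<omega> i))"
        by (intro PiM_cong refl distr_PiM_component[symmetric] prob_space_U) auto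
      finally show ?thesis .
    qed
  qed (use assms in auto)
qed

lemma tail:
  fixes I :: "'i set" and a b :: "'i \<Rightarrow> real"
  assumes fin: "finite I" and ne: "I \<noteq> {}" and A: "A > 0" and aA: "\<And>i. i \<in> I \<Longrightarrow> \<bar>a i\<bar> \<le> A"
    and eps: "\<epsilon> \<ge> 0"
  shows "measure (PiM I (\<lambda>_. U)) {\<omega> \<in> space (PiM I (\<lambda>_. U)).
           \<bar>\<Sum>i\<in>I. a i * cos (2*pi*\<omega> i + b i)\<bar> \<ge> \<epsilon>}
         \<le> 2 * exp (- (\<epsilon>\<^sup>2 / (2 * real (card I) * A\<^sup>2)))"
proof -
  let ?P = "PiM I (\<lambda>_. U)"
  interpret P: prob_space ?P by (intro prob_space_PiM prob_space_U)
  define X where "X = (\<lambda>i \<omega>. a i * cos (2*pi*\<omega> i + b i))"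
  have indep: "P.indep_vars (\<lambda>_. borel) X I"
    unfolding X_def
  proof (rule P.indep_vars_compose2[OF indep_comp[OF fin ne], where Y="\<lambda>i x. a i * cos (2*pi*x + b i)"])
    fix i assume "i \<in> I"
    have "(\<lambda>x. a i * cos (2*pi*x + b i)) \<in> borel_measurable borel" by measurable
    thus "(\<lambda>x. a i * cos (2*pi*x + b i)) \<in> measurable U borel"
      by (subst measurable_cong_sets[OF sets_uniform_measure refl]) (simp add: measurable_lborel1)
  qed
  have E: "P.expectation (X i) = 0" if i: "i \<in> I" for i
  proof -
    have m: "(\<lambda>\<omega>. \<omega> i) \<in> measurable ?P U" using i by (rule measurable_component_singleton)
    have f: "(\<lambda>x. a i * cos (2*pi*x + b i)) \<in> borel_measurable U"
    proof -
      have "(\<lambda>x. a i * cos (2*pi*x + b i)) \<in> borel_measurable borel" by measurable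
      thus ?thesis
        by (subst measurable_cong_sets[OF sets_uniform_measure refl]) (simp add: measurable_lborel1)
    qed
    have "P.expectation (X i) = integral\<^sup>L (distr ?P U (\<lambda>\<omega>. \<omega> i)) (\<lambda>x. a i * cos (2*pi*x + b i))"
      unfolding X_def by (rule integral_distr[OF m f, symmetric])
    also have "distr ?P U (\<lambda>\<omega>. \<omega> i) = U"
      by (intro distr_PiM_component prob_space_U i)
    also have "integral\<^sup>L U (\<lambda>x. a i * cos (2*pi*x + b i)) = a i * integral\<^sup>L U (\<lambda>x. cos (2*pi*x + b i))"
      by (rule integral_mult_right_zero)
    finally show ?thesis unfolding U_cos by simp
  qed
  interpret H: Hoeffding_ineq ?P I X "\<lambda>_. -A" "\<lambda>_. A" "\<Sum>i\<in>I. P.expectation (X i)"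
  proof unfold_locales
    show "finite I" by fact
    show "P.indep_vars (\<lambda>_. borel) X I" by fact
    fix i assume i: "i \<in> I"
    show "AE x in ?P. X i x \<in> {- A..A}"
    proof (intro AE_I2)
      fix x
      have "\<bar>a i * cos (2*pi*x i + b i)\<bar> \<le> A * 1"
        unfolding abs_mult by (intro mult_mono aA i) (use A in auto)
      thus "X i x \<in> {- A..A}" unfolding X_def by auto
    qed
  qed simp
  have mu: "(\<Sum>i\<in>I. P.expectation (X i)) = 0" using E by simp
  have sq: "(\<Sum>i\<in>I. (A - - A)\<^sup>2) = 4 * real (card I) * A\<^sup>2"
    by (simp add: power2_eq_square)
  have pos: "(\<Sum>i\<in>I. (A - - A)\<^sup>2) > 0" unfolding sq using A fin ne by (simp add: card_gt_0_iff)
  have "measure ?P {\<omega> \<in> space ?P. \<bar>(\<Sum>i\<in>I. X i \<omega>) - (\<Sum>i\<in>I. P.expectation (X i))\<bar> \<ge> \<epsilon>}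
        \<le> 2 * exp (- 2 * \<epsilon>\<^sup>2 / (\<Sum>i\<in>I. (A - - A)\<^sup>2))"
    by (rule H.Hoeffding_ineq_abs_ge[OF eps pos])
  also have "- 2 * \<epsilon>\<^sup>2 / (\<Sum>i\<in>I. (A - - A)\<^sup>2) = - (\<epsilon>\<^sup>2 / (2 * real (card I) * A\<^sup>2))"
    unfolding sq by simp
  finally show ?thesis unfolding mu by (simp add: X_def)
qed



lemma exp_i_diff: "cmod (exp (\<i> * complex_of_real x) - exp (\<i> * complex_of_real y)) \<le> \<bar>x - y\<bar>"
proof -
  have e: "exp (\<i> * complex_of_real t) = Complex (cos t) (sin t)" for t
    by (simp add: exp_eq_polar cis.ctr)
  have "(cmod (exp (\<i> * complex_of_real x) - exp (\<i> * complex_of_real y)))\<^sup>2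
        = (cos x - cos y)\<^sup>2 + (sin x - sin y)\<^sup>2"
    unfolding e by (simp add: cmod_def)
  also have "\<dots> = 2 - 2 * cos (x - y)"
  proof -
    have "(cos x - cos y)\<^sup>2 + (sin x - sin y)\<^sup>2 = ((cos x)\<^sup>2 + (sin x)\<^sup>2) + ((cos y)\<^sup>2 + (sin y)\<^sup>2) - 2 * (cos x * cos y + sin x * sin y)"
      by (simp add: power2_eq_square algebra_simps)
    thus ?thesis by (simp add: cos_diff)
  qed
  also have "\<dots> = 4 * (sin ((x - y)/2))\<^sup>2"
  proof -
    have "cos (x - y) = cos (2 * ((x-y)/2))" by (rule arg_cong[where f=cos]) simp
    also have "\<dots> = 1 - 2 * (sin ((x-y)/2))\<^sup>2" by (rule cos_double_sin)
    finally show ?thesis by simp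
  qed
  also have "\<dots> \<le> 4 * ((x - y)/2)\<^sup>2"
    using abs_sin_x_le_abs_x[of "(x-y)/2"]
    by (intro mult_left_mono) (auto simp: abs_le_square_iff[symmetric])
  also have "\<dots> = (x - y)\<^sup>2" by (simp add: power2_eq_square)
  finally have "(cmod (exp (\<i> * complex_of_real x) - exp (\<i> * complex_of_real y)))\<^sup>2 \<le> (x - y)\<^sup>2" .
  thus ?thesis using abs_le_square_iff[of "cmod (exp (\<i> * complex_of_real x) - exp (\<i> * complex_of_real y))" "x - y"] by simp
qed


lemma lip_sum:
  fixes d :: "int \<Rightarrow> complex" and al w :: "int \<Rightarrow> real"
  shows "cmod ((\<Sum>n\<in>S. d n * exp (\<i> * complex_of_real (al n + w n * t))) -
               (\<Sum>n\<in>S. d n * exp (\<i> * complex_of_real (al n + w n * u))))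
         \<le> (\<Sum>n\<in>S. cmod (d n) * \<bar>w n\<bar>) * \<bar>t - u\<bar>"
proof -
  have "cmod ((\<Sum>n\<in>S. d n * exp (\<i> * complex_of_real (al n + w n * t))) -
               (\<Sum>n\<in>S. d n * exp (\<i> * complex_of_real (al n + w n * u))))
       = cmod (\<Sum>n\<in>S. d n * (exp (\<i> * complex_of_real (al n + w n * t)) - exp (\<i> * complex_of_real (al n + w n * u))))"
    by (simp add: sum_subtractf algebra_simps)
  also have "\<dots> \<le> (\<Sum>n\<in>S. cmod (d n * (exp (\<i> * complex_of_real (al n + w n * t)) - exp (\<i> * complex_of_real (al n + w n * u)))))"
    by (rule norm_sum)
  also have "\<dots> \<le> (\<Sum>n\<in>S. cmod (d n) * \<bar>w n\<bar> * \<bar>t - u\<bar>)"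
  proof (intro sum_mono)
    fix n
    have "cmod (exp (\<i> * complex_of_real (al n + w n * t)) - exp (\<i> * complex_of_real (al n + w n * u)))
          \<le> \<bar>(al n + w n * t) - (al n + w n * u)\<bar>" by (rule exp_i_diff)
    also have "\<dots> = \<bar>w n\<bar> * \<bar>t - u\<bar>" by (simp add: abs_mult[symmetric] algebra_simps)
    finally show "cmod (d n * (exp (\<i> * complex_of_real (al n + w n * t)) - exp (\<i> * complex_of_real (al n + w n * u))))
          \<le> cmod (d n) * \<bar>w n\<bar> * \<bar>t - u\<bar>"
      unfolding norm_mult by (simp add: mult.assoc mult_left_mono)
  qed
  also have "\<dots> = (\<Sum>n\<in>S. cmod (d n) * \<bar>w n\<bar>) * \<bar>t - u\<bar>" by (simp add: sum_distrib_right)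
  finally show ?thesis .
qed


lemma s_bound:
  assumes M: "M \<ge> 1"
  shows "0 \<le> fejer_sq_coeff M n \<and> fejer_sq_coeff M n \<le> 3"
proof -
  define lo where "lo = max (n - int M) (- int M)"
  define hi where "hi = min (n + int M) (int M)"
  define f where "f = (\<lambda>i::int. (1 - \<bar>real_of_int i / real M\<bar>) * (1 - \<bar>real_of_int n / real M - real_of_int i / real M\<bar>))"
  have t: "0 \<le> f i \<and> f i \<le> 1" if i: "i \<in> {lo..hi}" for i
  proof -
    from i have a: "\<bar>real_of_int i\<bar> \<le> real M" and b: "\<bar>real_of_int n - real_of_int i\<bar> \<le> real M"
      unfolding lo_def hi_def by auto
    have a': "\<bar>real_of_int i / real M\<bar> \<le> 1" using a M
      unfolding abs_divide by (subst divide_le_eq_1_pos) auto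
    have e: "\<bar>real_of_int n / real M - real_of_int i / real M\<bar> = \<bar>real_of_int n - real_of_int i\<bar> / real M"
      unfolding diff_divide_distrib[symmetric] abs_divide by simp
    have "\<bar>real_of_int n - real_of_int i\<bar> / real M \<le> 1" using b M
      by (subst divide_le_eq_1_pos) auto
    hence b': "\<bar>real_of_int n / real M - real_of_int i / real M\<bar> \<le> 1" unfolding e .
    show ?thesis unfolding f_def using a' b' by (auto intro!: mult_nonneg_nonneg mult_le_one)
  qed
  have sum0: "0 \<le> sum f {lo..hi}"
    using t by (intro sum_nonneg) auto
  have c: "card {lo..hi} \<le> 2 * M + 1" unfolding lo_def hi_def card_atLeastAtMost_int by linarith
  have "sum f {lo..hi} \<le> (\<Sum>i\<in>{lo..hi}. 1)"
    using t by (intro sum_mono) auto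
  also have "\<dots> = real (card {lo..hi})" by simp
  also have "\<dots> \<le> 2 * real M + 1" using c by linarith
  also have "\<dots> \<le> 3 * real M" using M by simp
  finally have s3: "sum f {lo..hi} \<le> 3 * real M" .
  have eq: "fejer_sq_coeff M n = sum f {lo..hi} / real M"
    unfolding fejer_sq_coeff_def lo_def hi_def f_def by simp
  have "sum f {lo..hi} / real M \<le> 3" using s3 M by (subst divide_le_eq) auto
  thus ?thesis unfolding eq using sum0 by simp
qed

lemma t1: "Re (complex_of_real r * exp (\<i> * complex_of_real x)) = r * cos x"
  by (simp add: Re_exp Im_exp)
lemma t2: "Im (complex_of_real r * exp (\<i> * complex_of_real x)) = r * sin x"
  by (simp add: Re_exp Im_exp)
lemma t3: "Re (complex_of_real r * (\<i> * complex_of_real w) * exp (\<i> * complex_of_real x)) = (w * r) * (- sin x)"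
  by (simp add: Re_exp Im_exp)
lemma t4: "Im (complex_of_real r * (\<i> * complex_of_real w) * exp (\<i> * complex_of_real x)) = (w * r) * cos x"
  by (simp add: Re_exp Im_exp)
lemma sin_shift: "sin (a + b) = cos (a + (b - pi/2))"
proof -
  have "a + (b - pi/2) = - (pi/2 - (a + b))" by simp
  hence "cos (a + (b - pi/2)) = cos (pi/2 - (a + b))" by (simp only: cos_minus)
  thus ?thesis using sin_cos_eq[of "a+b"] by simp
qed
lemma msin_shift: "- sin (a + b) = cos (a + (b + pi/2))"
  using minus_sin_cos_eq[of "a+b"] by (simp add: add.assoc)


definition Ii :: "nat \<Rightarrow> int set" where "Ii M = {- 2 * int M .. 2 * int M}"
definition sc :: "nat \<Rightarrow> int \<Rightarrow> real" where "sc M n = fejer_sq_coeff M n / real M"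
definition th :: "(int \<Rightarrow> real) \<Rightarrow> int \<Rightarrow> real \<Rightarrow> real" where "th \<phi> n t = 2 * pi * \<phi> n + 2 * pi * real_of_int n * t"

definition KK where "KK M \<phi> t = (\<Sum>n\<in>Ii M. complex_of_real (sc M n) * exp (\<i> * complex_of_real (th \<phi> n t)))"
definition KD where "KD M \<phi> t = (\<Sum>n\<in>Ii M. complex_of_real (sc M n) * (\<i> * complex_of_real (2 * pi * real_of_int n)) * exp (\<i> * complex_of_real (th \<phi> n t)))"

lemma K_eq: "K_g M \<phi> t = KK M \<phi> t"
proof -
  have "K_g M \<phi> t = (\<Sum>n\<in>Ii M. (1 / complex_of_real (real M)) * (complex_of_real (fejer_sq_coeff M n) * phase \<phi> n *
        exp (\<i> * complex_of_real (2 * pi * real_of_int n * t))))"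
    unfolding K_g_def Ii_def by (rule sum_distrib_left)
  also have "\<dots> = KK M \<phi> t" unfolding KK_def
  proof (rule sum.cong[OF refl])
    fix n
    have "exp (\<i> * complex_of_real (th \<phi> n t)) = phase \<phi> n * exp (\<i> * complex_of_real (2 * pi * real_of_int n * t))"
      unfolding phase_def th_def exp_add[symmetric] by (simp add: distrib_left)
    thus "(1 / complex_of_real (real M)) * (complex_of_real (fejer_sq_coeff M n) * phase \<phi> n *
        exp (\<i> * complex_of_real (2 * pi * real_of_int n * t))) = complex_of_real (sc M n) * exp (\<i> * complex_of_real (th \<phi> n t))"
      unfolding sc_def by (simp add: of_real_divide)
  qed
  finally show ?thesis .
qed

lemma term_deriv: "((\<lambda>z. c * exp (\<i> * (a + b * z))) has_field_derivative c * (exp (\<i> * (a + b * z)) * (\<i> * b))) (at z)"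
  by (auto intro!: derivative_eq_intros)

lemma KK_deriv: "(KK M \<phi> has_vector_derivative KD M \<phi> t) (at t)"
proof -
  define F where "F = (\<lambda>z. \<Sum>n\<in>Ii M. complex_of_real (sc M n) * exp (\<i> * (complex_of_real (2 * pi * \<phi> n) + complex_of_real (2 * pi * real_of_int n) * z)))"
  have "(F has_field_derivative (\<Sum>n\<in>Ii M. complex_of_real (sc M n) * (exp (\<i> * (complex_of_real (2 * pi * \<phi> n) + complex_of_real (2 * pi * real_of_int n) * complex_of_real t)) * (\<i> * complex_of_real (2 * pi * real_of_int n)))))
        (at (complex_of_real t))"
    unfolding F_def by (intro DERIV_sum term_deriv)
  also have "(\<Sum>n\<in>Ii M. complex_of_real (sc M n) * (exp (\<i> * (complex_of_real (2 * pi * \<phi> n) + complex_of_real (2 * pi * real_of_int n) * complex_of_real t)) * (\<i> * complex_of_real (2 * pi * real_of_int n))))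
     = KD M \<phi> t"
    unfolding KD_def th_def by (intro sum.cong refl) (simp add: algebra_simps)
  finally have "((\<lambda>x. F (of_real x)) has_vector_derivative KD M \<phi> t) (at t)"
    by (rule has_vector_derivative_real_field)
  also have "(\<lambda>x. F (of_real x)) = KK M \<phi>"
    unfolding F_def KK_def th_def by (intro ext sum.cong refl) (simp add: algebra_simps)
  finally show ?thesis .
qed


lemma ReKK: "Re (KK M \<phi> t) = (\<Sum>n\<in>Ii M. sc M n * cos (2 * pi * \<phi> n + 2 * pi * real_of_int n * t))"
  unfolding KK_def th_def Re_sum t1 ..
lemma ImKK: "Im (KK M \<phi> t) = (\<Sum>n\<in>Ii M. sc M n * cos (2 * pi * \<phi> n + (2 * pi * real_of_int n * t - pi / 2)))"
  unfolding KK_def th_def Im_sum t2 sin_shift ..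
lemma ReKD: "Re (KD M \<phi> t) = (\<Sum>n\<in>Ii M. (2 * pi * real_of_int n * sc M n) * cos (2 * pi * \<phi> n + (2 * pi * real_of_int n * t + pi / 2)))"
  unfolding KD_def th_def Re_sum t3 msin_shift ..
lemma ImKD: "Im (KD M \<phi> t) = (\<Sum>n\<in>Ii M. (2 * pi * real_of_int n * sc M n) * cos (2 * pi * \<phi> n + 2 * pi * real_of_int n * t))"
  unfolding KD_def th_def Im_sum t4 ..



lemma card_Ii: "card (Ii M) = 4 * M + 1"
  unfolding Ii_def card_atLeastAtMost_int by simp

lemma finite_Ii: "finite (Ii M)" unfolding Ii_def by simp
lemma Ii_ne: "Ii M \<noteq> {}" unfolding Ii_def by simp

lemma sc_bound: assumes "M \<ge> 1" shows "\<bar>sc M n\<bar> \<le> 3 / real M"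
proof -
  have "0 \<le> fejer_sq_coeff M n" "fejer_sq_coeff M n \<le> 3" using s_bound[OF assms] by auto
  moreover have "real M > 0" using assms by simp
  ultimately have "0 \<le> sc M n" "sc M n \<le> 3 / real M" unfolding sc_def
    by (auto intro: divide_right_mono)
  thus ?thesis by simp
qed

lemma n_bound: assumes "n \<in> Ii M" shows "\<bar>2 * pi * real_of_int n\<bar> \<le> 4 * pi * real M"
proof -
  have "\<bar>real_of_int n\<bar> \<le> 2 * real M" using assms unfolding Ii_def by auto
  hence "2 * pi * \<bar>real_of_int n\<bar> \<le> 2 * pi * (2 * real M)" by (intro mult_left_mono) auto
  thus ?thesis by (simp add: abs_mult)
qed

lemma coef_bound: assumes "M \<ge> 1" "n \<in> Ii M"
  shows "\<bar>2 * pi * real_of_int n * sc M n\<bar> \<le> 12 * pi"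
proof -
  have "\<bar>2 * pi * real_of_int n * sc M n\<bar> = \<bar>2 * pi * real_of_int n\<bar> * \<bar>sc M n\<bar>" by (rule abs_mult)
  also have "\<dots> \<le> (4 * pi * real M) * (3 / real M)"
    by (intro mult_mono n_bound sc_bound assms) auto
  also have "\<dots> = 12 * pi" using assms by simp
  finally show ?thesis .
qed

lemma lipKK: assumes "M \<ge> 1" shows "cmod (KK M \<phi> t - KK M \<phi> u) \<le> 60 * pi * real M * \<bar>t - u\<bar>"
proof -
  have "cmod (KK M \<phi> t - KK M \<phi> u) \<le> (\<Sum>n\<in>Ii M. cmod (complex_of_real (sc M n)) * \<bar>2 * pi * real_of_int n\<bar>) * \<bar>t - u\<bar>"
    unfolding KK_def th_def using lip_sum[where d="\<lambda>n. complex_of_real (sc M n)" and al="\<lambda>n. 2 * pi * \<phi> n" and w="\<lambda>n. 2 * pi * real_of_int n" and S="Ii M" and t=t and u=u]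
    by simp
  also have "(\<Sum>n\<in>Ii M. cmod (complex_of_real (sc M n)) * \<bar>2 * pi * real_of_int n\<bar>) \<le> (\<Sum>n\<in>Ii M. 12 * pi)"
  proof (intro sum_mono)
    fix n assume n: "n \<in> Ii M"
    have "cmod (complex_of_real (sc M n)) * \<bar>2 * pi * real_of_int n\<bar> = \<bar>2 * pi * real_of_int n * sc M n\<bar>"
      by (simp add: abs_mult)
    thus "cmod (complex_of_real (sc M n)) * \<bar>2 * pi * real_of_int n\<bar> \<le> 12 * pi" using coef_bound[OF assms n] by simp
  qed
  also have "(\<Sum>n\<in>Ii M. 12 * pi) = (4 * real M + 1) * (12 * pi)" by (simp add: card_Ii)
  also have "\<dots> \<le> 60 * pi * real M" using assms by (simp add: algebra_simps)
  finally show ?thesis by (simp add: mult_right_mono)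
qed

lemma lipKD: assumes "M \<ge> 1" shows "cmod (KD M \<phi> t - KD M \<phi> u) \<le> 240 * pi\<^sup>2 * (real M)\<^sup>2 * \<bar>t - u\<bar>"
proof -
  have "cmod (KD M \<phi> t - KD M \<phi> u) \<le> (\<Sum>n\<in>Ii M. cmod (complex_of_real (sc M n) * (\<i> * complex_of_real (2 * pi * real_of_int n))) * \<bar>2 * pi * real_of_int n\<bar>) * \<bar>t - u\<bar>"
    unfolding KD_def th_def using lip_sum[where d="\<lambda>n. complex_of_real (sc M n) * (\<i> * complex_of_real (2 * pi * real_of_int n))" and al="\<lambda>n. 2 * pi * \<phi> n" and w="\<lambda>n. 2 * pi * real_of_int n" and S="Ii M" and t=t and u=u]
    by simp
  also have "(\<Sum>n\<in>Ii M. cmod (complex_of_real (sc M n) * (\<i> * complex_of_real (2 * pi * real_of_int n))) * \<bar>2 * pi * real_of_int n\<bar>) \<le> (\<Sum>n\<in>Ii M. 12 * pi * (4 * pi * real M))"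
  proof (intro sum_mono)
    fix n assume n: "n \<in> Ii M"
    have "cmod (complex_of_real (sc M n) * (\<i> * complex_of_real (2 * pi * real_of_int n))) = \<bar>2 * pi * real_of_int n * sc M n\<bar>"
      by (simp add: norm_mult abs_mult)
    thus "cmod (complex_of_real (sc M n) * (\<i> * complex_of_real (2 * pi * real_of_int n))) * \<bar>2 * pi * real_of_int n\<bar> \<le> 12 * pi * (4 * pi * real M)"
      using mult_mono[OF coef_bound[OF assms n] n_bound[OF n]] by simp
  qed
  also have "(\<Sum>n\<in>Ii M. 12 * pi * (4 * pi * real M)) = (4 * real M + 1) * (12 * pi * (4 * pi * real M))" by (simp add: card_Ii)
  also have "\<dots> \<le> 240 * pi\<^sup>2 * (real M)\<^sup>2"
  proof -
    have "(4 * real M + 1) * (12 * pi * (4 * pi * real M)) = (4 * real M + 1) * real M * (48 * pi\<^sup>2)"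
      by (simp add: power2_eq_square algebra_simps)
    also have "\<dots> \<le> (5 * real M) * real M * (48 * pi\<^sup>2)"
      using assms by (intro mult_right_mono) auto
    also have "\<dots> = 240 * pi\<^sup>2 * (real M)\<^sup>2" by (simp add: power2_eq_square algebra_simps)
    finally show ?thesis .
  qed
  finally show ?thesis by (simp add: mult_right_mono)
qed

lemma meas_sum:
  fixes f :: "int \<Rightarrow> real \<Rightarrow> 'b::{second_countable_topology, real_normed_vector}"
  assumes "\<And>n. f n \<in> borel_measurable borel"
  shows "(\<lambda>\<phi>. \<Sum>n\<in>Ii M. f n (\<phi> n)) \<in> borel_measurable (phase_space M)"
proof (intro borel_measurable_sum)
  fix n assume n: "n \<in> Ii M"
  have c: "(\<lambda>\<phi>. \<phi> n) \<in> measurable (phase_space M) U"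
    unfolding phase_space_def using n unfolding Ii_def by (rule measurable_component_singleton)
  have "f n \<in> measurable U borel"
    by (subst measurable_cong_sets[OF sets_uniform_measure refl]) (simp add: assms)
  thus "(\<lambda>\<phi>. f n (\<phi> n)) \<in> borel_measurable (phase_space M)"
    using measurable_compose[OF c] by blast
qed

lemma KK_meas[measurable]: "(\<lambda>\<phi>. KK M \<phi> t) \<in> borel_measurable (phase_space M)"
  unfolding KK_def th_def
  using meas_sum[of "\<lambda>n x. complex_of_real (sc M n) * exp (\<i> * complex_of_real (2 * pi * x + 2 * pi * real_of_int n * t))" M]
  by simp

lemma KD_meas[measurable]: "(\<lambda>\<phi>. KD M \<phi> t) \<in> borel_measurable (phase_space M)"
  unfolding KD_def th_def
  using meas_sum[of "\<lambda>n x. complex_of_real (sc M n) * (\<i> * complex_of_real (2 * pi * real_of_int n)) * exp (\<i> * complex_of_real (2 * pi * x + 2 * pi * real_of_int n * t))" M]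
  by simp

lemma cos_meas: "(\<lambda>\<phi>. \<Sum>n\<in>Ii M. a n * cos (2 * pi * \<phi> n + b n)) \<in> borel_measurable (phase_space M)"
  using meas_sum[of "\<lambda>n x. a n * cos (2 * pi * x + b n)" M] by simp

lemma dense_bound:
  fixes f :: "real \<Rightarrow> complex"
  assumes lip: "\<And>t u. cmod (f t - f u) \<le> L * \<bar>t - u\<bar>" and L: "L \<ge> 0"
    and q: "\<forall>q\<in>\<rat> \<inter> {0..<1}. cmod (f q) \<le> c" and t: "t \<in> {0..<1}"
  shows "cmod (f t) \<le> c"
proof (rule field_le_epsilon)
  fix e :: real assume e: "e > 0"
  define d where "d = min (e / (L + 1)) (1 - t)"
  have d: "d > 0" using e t L unfolding d_def by auto
  obtain r where r: "r \<in> \<rat>" "t < r" "r < t + d" using Rats_dense_in_real[of t "t + d"] d by auto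
  have rI: "r \<in> \<rat> \<inter> {0..<1}" using r t unfolding d_def by auto
  have "cmod (f t) \<le> cmod (f r) + cmod (f t - f r)" by (rule norm_triangle_sub)
  also have "\<dots> \<le> c + L * \<bar>t - r\<bar>" using q rI lip by (intro add_mono) auto
  also have "L * \<bar>t - r\<bar> \<le> L * d" using r L by (intro mult_left_mono) auto
  also have "L * d \<le> L * (e / (L + 1))" using L unfolding d_def by (intro mult_left_mono) auto
  also have "L * (e / (L + 1)) \<le> e" using L e by (simp add: field_simps)
  finally show "cmod (f t) \<le> c + e" by simp
qed



lemma exp_bound: fixes m x :: real assumes m: "m \<ge> 4" and x: "x \<ge> 4 * ln m" shows "exp (- x) \<le> 1 / m ^ 4"
proof -
  have "exp (- x) \<le> exp (- (4 * ln m))" using x by simp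
  also have "ln (m ^ 4) = 4 * ln m" using m by (simp add: ln_realpow)
  hence "exp (4 * ln m) = m ^ 4" using m by (metis exp_ln zero_less_power order_less_le_trans zero_less_numeral)
  hence "exp (- (4 * ln m)) = 1 / m ^ 4" by (simp add: exp_minus inverse_eq_divide)
  finally show ?thesis .
qed

lemma frac_bound: fixes m L :: real assumes m: "m \<ge> 4" and L: "L \<ge> 0"
  shows "4 * L \<le> 20 * m * L / (4 * m + 1)"
proof -
  have "4 * L * (4 * m + 1) \<le> 20 * m * L"
  proof -
    have "4 * L * (4 * m + 1) = (16 * m + 4) * L" by (simp add: algebra_simps)
    also have "\<dots> \<le> (20 * m) * L" using m L by (intro mult_right_mono) auto
    finally show ?thesis by simp
  qed
  thus ?thesis using m by (simp add: le_divide_eq)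
qed

lemma num0: fixes m L :: real assumes m: "m \<ge> 4" and L: "L \<ge> 0"
  shows "4 * L \<le> 360 * (L / m) / (2 * (4 * m + 1) * (3 / m)\<^sup>2)"
proof -
  have "360 * (L / m) / (2 * (4 * m + 1) * (3 / m)\<^sup>2) = 20 * m * L / (4 * m + 1)"
    using m by (simp add: field_simps power2_eq_square)
  thus ?thesis using frac_bound[OF m L] by simp
qed

lemma num1: fixes m L :: real assumes m: "m \<ge> 4" and L: "L \<ge> 0"
  shows "4 * L \<le> 5760 * pi\<^sup>2 * (m * L) / (2 * (4 * m + 1) * (12 * pi)\<^sup>2)"
proof -
  have p: "pi\<^sup>2 \<noteq> 0" by simp
  have q: "4 * m + 1 \<noteq> 0" using m by simp
  have "(12 * pi)\<^sup>2 = 144 * pi\<^sup>2" by (simp add: power2_eq_square)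
  hence "5760 * pi\<^sup>2 * (m * L) / (2 * (4 * m + 1) * (12 * pi)\<^sup>2) = (20 * m * L * (288 * pi\<^sup>2)) / ((4 * m + 1) * (288 * pi\<^sup>2))"
    by (simp add: algebra_simps)
  also have "\<dots> = 20 * m * L / (4 * m + 1)" by (rule mult_divide_mult_cancel_right) simp
  finally have "5760 * pi\<^sup>2 * (m * L) / (2 * (4 * m + 1) * (12 * pi)\<^sup>2) = 20 * m * L / (4 * m + 1)" .
  thus ?thesis using frac_bound[OF m L] by simp
qed

lemma numA: fixes m :: real assumes m: "m \<ge> 4" shows "1 / m \<le> sqrt (ln m / m)"
proof (rule real_le_rsqrt)
  have "ln m \<ge> 1"
  proof -
    have "exp 1 \<le> m" using exp_le m by simp
    thus ?thesis using m by (subst ln_ge_iff) auto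
  qed
  hence "1 * 1 \<le> ln m * m" using m by (intro mult_mono) auto
  hence "1 / m \<le> ln m" using m by (simp add: divide_le_eq)
  hence "1 / m * (1 / m) \<le> ln m * (1 / m)" using m by (intro mult_right_mono) auto
  thus "(1 / m)\<^sup>2 \<le> ln m / m" by (simp add: power2_eq_square)
qed

lemma numB: fixes m :: real assumes m: "m \<ge> 4" shows "1 \<le> sqrt (m * ln m)"
proof -
  have "ln m \<ge> 1"
  proof -
    have "exp 1 \<le> m" using exp_le m by simp
    thus ?thesis using m by (subst ln_ge_iff) auto
  qed
  hence "1 * 1 \<le> m * ln m" using m by (intro mult_mono) auto
  thus ?thesis by simp
qed

lemma numC: fixes m :: real assumes m: "m \<ge> 4"
  shows "8 / m\<^sup>2 \<le> 8 * (m ^ 3 * ln m) powr (- 1 / 2)"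
proof -
  have L1: "ln m \<ge> 1"
  proof -
    have "exp 1 \<le> m" using exp_le m by simp
    thus ?thesis using m by (subst ln_ge_iff) auto
  qed
  have Lm: "ln m \<le> m" using ln_le_minus_one[of m] m by simp
  have pos: "m ^ 3 * ln m > 0" using m L1 by simp
  have "(m ^ 3 * ln m) powr (- 1 / 2) = 1 / sqrt (m ^ 3 * ln m)"
    using pos by (simp add: powr_minus_divide powr_half_sqrt[symmetric] powr_minus)
  moreover have "sqrt (m ^ 3 * ln m) \<le> m\<^sup>2"
  proof (rule real_sqrt_le_iff[THEN iffD2, THEN order_trans])
    show "m ^ 3 * ln m \<le> (m\<^sup>2)\<^sup>2"
    proof -
      have "m ^ 3 * ln m \<le> m ^ 3 * m" using Lm m by (intro mult_left_mono) auto
      thus ?thesis by (simp add: power2_eq_square power3_eq_cube power4_eq_xxxx)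
    qed
    show "sqrt ((m\<^sup>2)\<^sup>2) \<le> m\<^sup>2" by (simp only: real_sqrt_abs abs_power2 order_refl)
  qed
  moreover have "sqrt (m ^ 3 * ln m) > 0" using pos by simp
  ultimately show ?thesis using m by (simp add: frac_le)
qed



lemma grid: assumes "N > 0" "\<tau> \<in> {0..<1}"
  shows "\<exists>k<N. \<bar>\<tau> - real k / real N\<bar> \<le> 1 / real N"
proof -
  define x where "x = \<tau> * real N"
  have x0: "x \<ge> 0" using assms unfolding x_def by auto
  have xN: "x < real N" using assms unfolding x_def by auto
  define k where "k = nat \<lfloor>x\<rfloor>"
  have rk: "real k = of_int \<lfloor>x\<rfloor>" using x0 unfolding k_def by simp
  have a: "real k \<le> x" using rk by linarith
  have b: "x < real k + 1" using rk by linarith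
  have kN: "k < N" using a xN by linarith
  have "\<bar>x - real k\<bar> \<le> 1" using a b by linarith
  hence "\<bar>x - real k\<bar> / real N \<le> 1 / real N" using assms by (intro divide_right_mono) auto
  moreover have "\<bar>x - real k\<bar> / real N = \<bar>\<tau> - real k / real N\<bar>"
  proof -
    have "(x - real k) / real N = \<tau> - real k / real N"
      using assms unfolding x_def by (simp add: diff_divide_distrib)
    moreover have "\<bar>x - real k\<bar> / real N = \<bar>(x - real k) / real N\<bar>" by (simp add: abs_divide)
    ultimately show ?thesis by simp
  qed
  ultimately show ?thesis using kN by auto
qed

lemma approx:
  fixes f :: "real \<Rightarrow> complex"
  assumes "\<bar>Re (f s)\<bar> < e" "\<bar>Im (f s)\<bar> < e" "cmod (f t - f s) \<le> L * \<bar>t - s\<bar>" "\<bar>t - s\<bar> \<le> d" "L \<ge> 0"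
  shows "cmod (f t) \<le> 2 * e + L * d"
proof -
  have "cmod (f t) \<le> cmod (f s) + cmod (f t - f s)" by (rule norm_triangle_sub)
  also have "cmod (f s) \<le> 2 * e" using cmod_le[of "f s"] assms by linarith
  also have "cmod (f t - f s) \<le> L * d" using assms(3,4,5) by (meson mult_left_mono order_trans)
  finally show ?thesis by simp
qed

lemma aux_cancel: fixes a :: real assumes "a \<noteq> 0" shows "a * (8 / (a * a)) = 8 / a"
  using assms by (simp add: field_simps)

definition cK1 :: real where "cK1 = 2 * sqrt 360 + 60 * pi"
definition cK2 :: real where "cK2 = 2 * sqrt 5760 * pi + 240 * pi\<^sup>2"

lemma ps: "phase_space M = PiM (Ii M) (\<lambda>_. U)" unfolding phase_space_def Ii_def ..

lemma main_bound:
  assumes M4: "M \<ge> 4"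
  shows "measure (phase_space M)
      {\<phi> \<in> space (phase_space M). \<forall>\<tau> \<in> {0..<1}.
          cmod (K_g M \<phi> \<tau>) \<le> cK1 * sqrt (ln (real M) / real M) \<and>
          cmod (vector_derivative (K_g M \<phi>) (at \<tau>)) \<le> cK2 * sqrt (real M * ln (real M))}
      \<ge> 1 - 8 * (real M ^ 3 * ln (real M)) powr (-1/2)"
proof -
  let ?P = "phase_space M"
  interpret P: prob_space ?P unfolding phase_space_def by (intro prob_space_PiM prob_space_U)
  have m4: "real M \<ge> 4" using M4 by simp
  have M1: "M \<ge> 1" using M4 by simp
  have L0: "ln (real M) \<ge> 0" using m4 by simp
  have Lm0: "ln (real M) / real M \<ge> 0" using L0 m4 by simp
  have mL0: "real M * ln (real M) \<ge> 0" using L0 m4 by simp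
  define c1 where "c1 = cK1 * sqrt (ln (real M) / real M)"
  define c2 where "c2 = cK2 * sqrt (real M * ln (real M))"
  define e0 where "e0 = sqrt 360 * sqrt (ln (real M) / real M)"
  define e1 where "e1 = sqrt 5760 * pi * sqrt (real M * ln (real M))"
  have e0_0: "e0 \<ge> 0" unfolding e0_def using Lm0 by simp
  have e1_0: "e1 \<ge> 0" unfolding e1_def using mL0 by simp
  have e0sq: "e0\<^sup>2 = 360 * (ln (real M) / real M)"
    unfolding e0_def power_mult_distrib using Lm0 by simp
  have e1sq: "e1\<^sup>2 = 5760 * pi\<^sup>2 * (real M * ln (real M))"
    unfolding e1_def power_mult_distrib using mL0 by simp
  have cardI: "real (card (Ii M)) = 4 * real M + 1" unfolding card_Ii by simp
  have A0pos: "3 / real M > 0" using m4 by simp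
  have A1pos: "12 * pi > 0" by simp

  have exp0: "exp (- (e0\<^sup>2 / (2 * real (card (Ii M)) * (3 / real M)\<^sup>2))) \<le> 1 / real M ^ 4"
    by (rule exp_bound[OF m4]) (unfold e0sq cardI, rule num0[OF m4 L0])
  have exp1: "exp (- (e1\<^sup>2 / (2 * real (card (Ii M)) * (12 * pi)\<^sup>2))) \<le> 1 / real M ^ 4"
    by (rule exp_bound[OF m4]) (unfold e1sq cardI, rule num1[OF m4 L0])

  have tReKK: "measure ?P {\<phi>\<in>space ?P. e0 \<le> \<bar>Re (KK M \<phi> t)\<bar>} \<le> 2 / real M ^ 4" for t
  proof -
    have "measure ?P {\<phi>\<in>space ?P. e0 \<le> \<bar>Re (KK M \<phi> t)\<bar>}
       \<le> 2 * exp (- (e0\<^sup>2 / (2 * real (card (Ii M)) * (3 / real M)\<^sup>2)))"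
      unfolding ReKK ps by (rule tail[OF finite_Ii Ii_ne A0pos _ e0_0]) (rule sc_bound[OF M1])
    also have "\<dots> \<le> 2 * (1 / real M ^ 4)" using exp0 by simp
    finally show ?thesis by simp
  qed
  have tImKK: "measure ?P {\<phi>\<in>space ?P. e0 \<le> \<bar>Im (KK M \<phi> t)\<bar>} \<le> 2 / real M ^ 4" for t
  proof -
    have "measure ?P {\<phi>\<in>space ?P. e0 \<le> \<bar>Im (KK M \<phi> t)\<bar>}
       \<le> 2 * exp (- (e0\<^sup>2 / (2 * real (card (Ii M)) * (3 / real M)\<^sup>2)))"
      unfolding ImKK ps by (rule tail[OF finite_Ii Ii_ne A0pos _ e0_0]) (rule sc_bound[OF M1])
    also have "\<dots> \<le> 2 * (1 / real M ^ 4)" using exp0 by simp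
    finally show ?thesis by simp
  qed
  have tReKD: "measure ?P {\<phi>\<in>space ?P. e1 \<le> \<bar>Re (KD M \<phi> t)\<bar>} \<le> 2 / real M ^ 4" for t
  proof -
    have "measure ?P {\<phi>\<in>space ?P. e1 \<le> \<bar>Re (KD M \<phi> t)\<bar>}
       \<le> 2 * exp (- (e1\<^sup>2 / (2 * real (card (Ii M)) * (12 * pi)\<^sup>2)))"
      unfolding ReKD ps by (rule tail[OF finite_Ii Ii_ne A1pos _ e1_0]) (rule coef_bound[OF M1])
    also have "\<dots> \<le> 2 * (1 / real M ^ 4)" using exp1 by simp
    finally show ?thesis by simp
  qed
  have tImKD: "measure ?P {\<phi>\<in>space ?P. e1 \<le> \<bar>Im (KD M \<phi> t)\<bar>} \<le> 2 / real M ^ 4" for t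
  proof -
    have "measure ?P {\<phi>\<in>space ?P. e1 \<le> \<bar>Im (KD M \<phi> t)\<bar>}
       \<le> 2 * exp (- (e1\<^sup>2 / (2 * real (card (Ii M)) * (12 * pi)\<^sup>2)))"
      unfolding ImKD ps by (rule tail[OF finite_Ii Ii_ne A1pos _ e1_0]) (rule coef_bound[OF M1])
    also have "\<dots> \<le> 2 * (1 / real M ^ 4)" using exp1 by simp
    finally show ?thesis by simp
  qed

  define N where "N = M\<^sup>2"
  have N0: "N > 0" unfolding N_def using M1 by simp
  have rN: "real N = (real M)\<^sup>2" unfolding N_def by simp
  define tk where "tk k = real k / real N" for k
  define B where "B k = {\<phi>\<in>space ?P. e0 \<le> \<bar>Re (KK M \<phi> (tk k))\<bar>} \<union> {\<phi>\<in>space ?P. e0 \<le> \<bar>Im (KK M \<phi> (tk k))\<bar>}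
      \<union> {\<phi>\<in>space ?P. e1 \<le> \<bar>Re (KD M \<phi> (tk k))\<bar>} \<union> {\<phi>\<in>space ?P. e1 \<le> \<bar>Im (KD M \<phi> (tk k))\<bar>}" for k
  have Bsets: "B k \<in> sets ?P" for k unfolding B_def by measurable
  have Bk: "measure ?P (B k) \<le> 8 / real M ^ 4" for k
  proof -
    have s1: "{\<phi>\<in>space ?P. e0 \<le> \<bar>Re (KK M \<phi> (tk k))\<bar>} \<in> sets ?P" by measurable
    have s2: "{\<phi>\<in>space ?P. e0 \<le> \<bar>Im (KK M \<phi> (tk k))\<bar>} \<in> sets ?P" by measurable
    have s3: "{\<phi>\<in>space ?P. e1 \<le> \<bar>Re (KD M \<phi> (tk k))\<bar>} \<in> sets ?P" by measurable
    have s4: "{\<phi>\<in>space ?P. e1 \<le> \<bar>Im (KD M \<phi> (tk k))\<bar>} \<in> sets ?P" by measurable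
    have "measure ?P (B k) \<le> measure ?P ({\<phi>\<in>space ?P. e0 \<le> \<bar>Re (KK M \<phi> (tk k))\<bar>} \<union> {\<phi>\<in>space ?P. e0 \<le> \<bar>Im (KK M \<phi> (tk k))\<bar>}
      \<union> {\<phi>\<in>space ?P. e1 \<le> \<bar>Re (KD M \<phi> (tk k))\<bar>}) + measure ?P {\<phi>\<in>space ?P. e1 \<le> \<bar>Im (KD M \<phi> (tk k))\<bar>}"
      unfolding B_def using s1 s2 s3 s4 by (intro measure_Un_le) auto
    also have "\<dots> \<le> (measure ?P ({\<phi>\<in>space ?P. e0 \<le> \<bar>Re (KK M \<phi> (tk k))\<bar>} \<union> {\<phi>\<in>space ?P. e0 \<le> \<bar>Im (KK M \<phi> (tk k))\<bar>})
      + measure ?P {\<phi>\<in>space ?P. e1 \<le> \<bar>Re (KD M \<phi> (tk k))\<bar>}) + measure ?P {\<phi>\<in>space ?P. e1 \<le> \<bar>Im (KD M \<phi> (tk k))\<bar>}"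
      using s1 s2 s3 s4 by (intro add_right_mono measure_Un_le) auto
    also have "\<dots> \<le> ((measure ?P {\<phi>\<in>space ?P. e0 \<le> \<bar>Re (KK M \<phi> (tk k))\<bar>} + measure ?P {\<phi>\<in>space ?P. e0 \<le> \<bar>Im (KK M \<phi> (tk k))\<bar>})
      + measure ?P {\<phi>\<in>space ?P. e1 \<le> \<bar>Re (KD M \<phi> (tk k))\<bar>}) + measure ?P {\<phi>\<in>space ?P. e1 \<le> \<bar>Im (KD M \<phi> (tk k))\<bar>}"
      using s1 s2 s3 s4 by (intro add_right_mono measure_Un_le) auto
    also have "\<dots> \<le> ((2 / real M ^ 4 + 2 / real M ^ 4) + 2 / real M ^ 4) + 2 / real M ^ 4"
      by (intro add_mono tReKK tImKK tReKD tImKD)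
    finally show ?thesis by simp
  qed
  have Keq: "K_g M \<phi> = KK M \<phi>" for \<phi> by (rule ext) (rule K_eq)
  have Deq: "vector_derivative (KK M \<phi>) (at \<tau>) = KD M \<phi> \<tau>" for \<phi> \<tau>
    by (rule vector_derivative_at[OF KK_deriv])
  define E where "E = {\<phi>\<in>space ?P. \<forall>\<tau>\<in>{0..<1}. cmod (KK M \<phi> \<tau>) \<le> c1 \<and> cmod (KD M \<phi> \<tau>) \<le> c2}"
  have goalset: "{\<phi> \<in> space (phase_space M). \<forall>\<tau> \<in> {0..<1}.
          cmod (K_g M \<phi> \<tau>) \<le> cK1 * sqrt (ln (real M) / real M) \<and>
          cmod (vector_derivative (K_g M \<phi>) (at \<tau>)) \<le> cK2 * sqrt (real M * ln (real M))} = E"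
    unfolding E_def Keq Deq c1_def c2_def ..
  have L1: "60 * pi * real M \<ge> 0" by simp
  have L2: "240 * pi\<^sup>2 * (real M)\<^sup>2 \<ge> 0" by simp
  have Erat: "E = {\<phi>\<in>space ?P. \<forall>q\<in>\<rat> \<inter> {0..<1}. cmod (KK M \<phi> q) \<le> c1 \<and> cmod (KD M \<phi> q) \<le> c2}"
    unfolding E_def
  proof (intro Collect_cong conj_cong refl)
    fix \<phi>
    show "(\<forall>\<tau>\<in>{0..<1}. cmod (KK M \<phi> \<tau>) \<le> c1 \<and> cmod (KD M \<phi> \<tau>) \<le> c2) =
          (\<forall>q\<in>\<rat> \<inter> {0..<1}. cmod (KK M \<phi> q) \<le> c1 \<and> cmod (KD M \<phi> q) \<le> c2)"
    proof
      assume "\<forall>\<tau>\<in>{0..<1}. cmod (KK M \<phi> \<tau>) \<le> c1 \<and> cmod (KD M \<phi> \<tau>) \<le> c2"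
      thus "\<forall>q\<in>\<rat> \<inter> {0..<1}. cmod (KK M \<phi> q) \<le> c1 \<and> cmod (KD M \<phi> q) \<le> c2" by auto
    next
      assume h: "\<forall>q\<in>\<rat> \<inter> {0..<1}. cmod (KK M \<phi> q) \<le> c1 \<and> cmod (KD M \<phi> q) \<le> c2"
      have h1: "\<forall>q\<in>\<rat> \<inter> {0..<1}. cmod (KK M \<phi> q) \<le> c1" using h by auto
      have h2: "\<forall>q\<in>\<rat> \<inter> {0..<1}. cmod (KD M \<phi> q) \<le> c2" using h by auto
      show "\<forall>\<tau>\<in>{0..<1}. cmod (KK M \<phi> \<tau>) \<le> c1 \<and> cmod (KD M \<phi> \<tau>) \<le> c2"
      proof (intro ballI conjI)
        fix \<tau> :: real assume \<tau>: "\<tau> \<in> {0..<1}"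
        show "cmod (KK M \<phi> \<tau>) \<le> c1" by (rule dense_bound[OF lipKK[OF M1] L1 h1 \<tau>])
        show "cmod (KD M \<phi> \<tau>) \<le> c2" by (rule dense_bound[OF lipKD[OF M1] L2 h2 \<tau>])
      qed
    qed
  qed
  have cnt: "countable (\<rat> \<inter> {0..<1::real})" by (rule countable_Int1[OF countable_rat])
  have Esets: "E \<in> sets ?P"
    unfolding Erat by (rule sets.sets_Collect_countable_All'[OF _ cnt]) measurable
  have fac1: "2 * e0 + 60 * pi * real M * (1 / real N) \<le> c1"
  proof -
    have "60 * pi * real M * (1 / real N) = 60 * pi * (1 / real M)"
      unfolding rN using m4 by (simp add: power2_eq_square)
    also have "\<dots> \<le> 60 * pi * sqrt (ln (real M) / real M)"
      by (intro mult_left_mono numA m4) simp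
    finally show ?thesis unfolding c1_def cK1_def e0_def by (simp add: algebra_simps)
  qed
  have fac2: "2 * e1 + 240 * pi\<^sup>2 * (real M)\<^sup>2 * (1 / real N) \<le> c2"
  proof -
    have "240 * pi\<^sup>2 * (real M)\<^sup>2 * (1 / real N) = 240 * pi\<^sup>2 * 1"
      unfolding rN using m4 by simp
    also have "\<dots> \<le> 240 * pi\<^sup>2 * sqrt (real M * ln (real M))"
      by (intro mult_left_mono numB m4) simp
    finally show ?thesis unfolding c2_def cK2_def e1_def by (simp add: algebra_simps)
  qed
  have sub: "space ?P - E \<subseteq> (\<Union>k\<in>{..<N}. B k)"
  proof
    fix \<phi> assume \<phi>: "\<phi> \<in> space ?P - E"
    show "\<phi> \<in> (\<Union>k\<in>{..<N}. B k)"
    proof (rule ccontr)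
      assume nb: "\<phi> \<notin> (\<Union>k\<in>{..<N}. B k)"
      have "\<phi> \<in> E" unfolding E_def
      proof (intro CollectI conjI ballI)
        show "\<phi> \<in> space ?P" using \<phi> by auto
        fix \<tau> :: real assume \<tau>: "\<tau> \<in> {0..<1}"
        obtain k where k: "k < N" "\<bar>\<tau> - real k / real N\<bar> \<le> 1 / real N" using grid[OF N0 \<tau>] by auto
        have kk: "\<bar>\<tau> - tk k\<bar> \<le> 1 / real N" using k unfolding tk_def by simp
        have nbk: "\<phi> \<notin> B k" using nb k by auto
        hence g: "\<bar>Re (KK M \<phi> (tk k))\<bar> < e0" "\<bar>Im (KK M \<phi> (tk k))\<bar> < e0"
                 "\<bar>Re (KD M \<phi> (tk k))\<bar> < e1" "\<bar>Im (KD M \<phi> (tk k))\<bar> < e1"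
          using \<phi> unfolding B_def by auto
        have "cmod (KK M \<phi> \<tau>) \<le> 2 * e0 + 60 * pi * real M * (1 / real N)"
          by (rule approx[where f="KK M \<phi>" and s="tk k" and t=\<tau>, OF g(1) g(2) lipKK[OF M1] kk L1])
        also note fac1
        finally show "cmod (KK M \<phi> \<tau>) \<le> c1" .
        have "cmod (KD M \<phi> \<tau>) \<le> 2 * e1 + 240 * pi\<^sup>2 * (real M)\<^sup>2 * (1 / real N)"
          by (rule approx[where f="KD M \<phi>" and s="tk k" and t=\<tau>, OF g(3) g(4) lipKD[OF M1] kk L2])
        also note fac2
        finally show "cmod (KD M \<phi> \<tau>) \<le> c2" .
      qed
      thus False using \<phi> by auto
    qed
  qed
  have "measure ?P (space ?P - E) \<le> measure ?P (\<Union>k\<in>{..<N}. B k)"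
    by (rule P.finite_measure_mono[OF sub]) (use Bsets in auto)
  also have "\<dots> \<le> (\<Sum>k\<in>{..<N}. measure ?P (B k))"
    by (rule P.finite_measure_subadditive_finite) (use Bsets in auto)
  also have "\<dots> \<le> (\<Sum>k\<in>{..<N}. 8 / real M ^ 4)" by (intro sum_mono Bk)
  also have "\<dots> = real N * (8 / real M ^ 4)" by simp
  also have "\<dots> = 8 / (real M)\<^sup>2"
  proof -
    have "real M ^ 4 = (real M)\<^sup>2 * (real M)\<^sup>2" by (simp add: power2_eq_square power4_eq_xxxx)
    hence "real N * (8 / real M ^ 4) = (real M)\<^sup>2 * (8 / ((real M)\<^sup>2 * (real M)\<^sup>2))" unfolding rN by simp
    also have "\<dots> = 8 / (real M)\<^sup>2" using m4 by (intro aux_cancel) simp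
    finally show ?thesis .
  qed
  finally have c: "measure ?P (space ?P - E) \<le> 8 / (real M)\<^sup>2" .
  have "measure ?P E = 1 - measure ?P (space ?P - E)"
    using P.finite_measure_compl[OF Esets] P.prob_space by simp
  hence "measure ?P E \<ge> 1 - 8 / (real M)\<^sup>2" using c by simp
  moreover have "8 / (real M)\<^sup>2 \<le> 8 * (real M ^ 3 * ln (real M)) powr (-1/2)" by (rule numC[OF m4])
  ultimately show ?thesis unfolding goalset by simp
qed

theorem lemma9:
  shows "\<exists>C1 C2 C3 :: real. \<forall>M :: nat. M \<ge> 4 \<longrightarrow>
    prob_space (phase_space M) \<and>
    measure (phase_space M)
      {\<phi> \<in> space (phase_space M). \<forall>\<tau> \<in> {0..<1}.
          cmod (K_g M \<phi> \<tau>) \<le> C1 * sqrt (ln (real M) / real M) \<and>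
          cmod (vector_derivative (K_g M \<phi>) (at \<tau>)) \<le> C2 * sqrt (real M * ln (real M))}
      \<ge> 1 - C3 * (real M ^ 3 * ln (real M)) powr (-1/2)"
proof -
  have key: "prob_space (phase_space M) \<and>
    measure (phase_space M)
      {\<phi> \<in> space (phase_space M). \<forall>\<tau> \<in> {0..<1}.
          cmod (K_g M \<phi> \<tau>) \<le> cK1 * sqrt (ln (real M) / real M) \<and>
          cmod (vector_derivative (K_g M \<phi>) (at \<tau>)) \<le> cK2 * sqrt (real M * ln (real M))}
      \<ge> 1 - 8 * (real M ^ 3 * ln (real M)) powr (-1/2)" if M: "M \<ge> 4" for M :: nat
  proof
    show "prob_space (phase_space M)" unfolding phase_space_def by (intro prob_space_PiM prob_space_U)
    show "measure (phase_space M)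
      {\<phi> \<in> space (phase_space M). \<forall>\<tau> \<in> {0..<1}.
          cmod (K_g M \<phi> \<tau>) \<le> cK1 * sqrt (ln (real M) / real M) \<and>
          cmod (vector_derivative (K_g M \<phi>) (at \<tau>)) \<le> cK2 * sqrt (real M * ln (real M))}
      \<ge> 1 - 8 * (real M ^ 3 * ln (real M)) powr (-1/2)"
      by (rule main_bound[OF M])
  qed
  show ?thesis
    by (rule exI[of _ cK1], rule exI[of _ cK2], rule exI[of _ "8::real"]) (use key in blast)
qed

end
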